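(* Let $n\geq 2$ and let $r$ be a positive integer. Let $X^n_r$ be the blow-up of $(\mathbb P^1)^n$ at $r$ points in very general position. Then the pseudoeffective cone $\overline{\mathrm{Eff}}_{n-1}(X^n_r)$ is fiber-generated if and only if $r\leq 2$.
   Context: Work over $\mathbb C$. For a smooth projective variety $X$ of dimension $n$, $N_k(X)$ denotes the real vector space of numerical equivalence classes of $k$-dimensional cycles (tensored with $\mathbb R$), and $\overline{\mathrm{Eff}}_k(X)\subseteq N_k(X)$ is the closure of the cone spanned by classes of $k$-dimensional subvarieties. Let $\pi: X^n_r\to(\mathbb P^1)^n$ be the blow-up at $r$ very general points $q_1,\dots,q_r$ (i.e. their configuration lies outside a countable union of proper closed subsets), with exceptional divisors $E_1,\dots,E_r$, each isomorphic to $\mathbb P^{n-1}$. For $I\subseteq\{1,\dots,n\}$ with $|I|=n-k$, let $p_I:(\mathbb P^1)^n\to(\mathbb P^1)^{n-k}$ be the projection onto the coordinates indexed by $I$, and let $H_I\in N_k(X^n_r)$ be the class of the pullback under $\pi$ of a fiber of $p_I$. Let $E_{j,k}\in N_k(X^n_r)$ be the class of a $k$-dimensional linear subspace of $E_j\cong\mathbb P^{n-1}$. The cone of fibers $\mathrm{CF}_k(X^n_r)$ is the cone generated by the classes $H_I-E_{i,k}$ ($|I|=n-k$, $1\le i\le r$) and $E_{i,k}$ ($1\le i\le r$). The cone $\overline{\mathrm{Eff}}_k(X^n_r)$ is called fiber-generated if $\overline{\mathrm{Eff}}_k(X^n_r)=\mathrm{CF}_k(X^n_r)$. *)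

theory Defs
  imports "HOL-Analysis.Analysis"
begin

(* Multivariate polynomials over C, given by a finite set S of exponent vectors
   (supported on the variable set V) and coefficients c. *)
definition mpoly_nonzero :: "'v set \<Rightarrow> ('v \<Rightarrow> nat) set \<Rightarrow> (('v \<Rightarrow> nat) \<Rightarrow> complex) \<Rightarrow> bool" where
  "mpoly_nonzero V S c \<longleftrightarrow> finite V \<and> finite S \<and> (\<forall>e\<in>S. \<forall>v. v \<notin> V \<longrightarrow> e v = 0) \<and> (\<exists>e\<in>S. c e \<noteq> 0)"

definition mpoly_eval :: "'v set \<Rightarrow> ('v \<Rightarrow> nat) set \<Rightarrow> (('v \<Rightarrow> nat) \<Rightarrow> complex) \<Rightarrow> ('v \<Rightarrow> complex) \<Rightarrow> complex" where
  "mpoly_eval V S c x = (\<Sum>e\<in>S. c e * (\<Prod>v\<in>V. x v ^ e v))"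

(* P holds for very general x in C^V: outside a countable union of proper
   Zariski-closed subsets (each contained in a hypersurface {f = 0}, f nonzero). *)
definition very_general :: "'v set \<Rightarrow> (('v \<Rightarrow> complex) \<Rightarrow> bool) \<Rightarrow> bool" where
  "very_general V P \<longleftrightarrow>
     (\<exists>F. countable F \<and> (\<forall>(S, c)\<in>F. mpoly_nonzero V S c) \<and>
          (\<forall>x. (\<forall>(S, c)\<in>F. mpoly_eval V S c x \<noteq> 0) \<longrightarrow> P x))"

(* exponent vectors of monomials of multidegree \<le> a in variables x_0..x_{n-1}
   (affine chart of (P^1)^n; such polynomials = multihomogeneous forms of multidegree a) *)
definition exps :: "nat \<Rightarrow> (nat \<Rightarrow> nat) \<Rightarrow> (nat \<Rightarrow> nat) set" where
  "exps n a = {e. (\<forall>j<n. e j \<le> a j) \<and> (\<forall>j\<ge>n. e j = 0)}"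

definition hasse :: "nat \<Rightarrow> (nat \<Rightarrow> nat) \<Rightarrow> ((nat \<Rightarrow> nat) \<Rightarrow> complex) \<Rightarrow> (nat \<Rightarrow> nat) \<Rightarrow> (nat \<Rightarrow> complex) \<Rightarrow> complex" where
  "hasse n a c beta p =
     (\<Sum>e\<in>exps n a. c e * (\<Prod>j<n. of_nat (e j choose beta j) * p j ^ (e j - beta j)))"

definition mult_ge :: "nat \<Rightarrow> (nat \<Rightarrow> nat) \<Rightarrow> ((nat \<Rightarrow> nat) \<Rightarrow> complex) \<Rightarrow> (nat \<Rightarrow> complex) \<Rightarrow> nat \<Rightarrow> bool" where
  "mult_ge n a c p m \<longleftrightarrow>
     (\<forall>beta. (\<forall>j\<ge>n. beta j = 0) \<and> (\<Sum>j<n. beta j) < m \<longrightarrow> hasse n a c beta p = 0)"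

(* N_{n-1}(X^n_r) = N^1(X^n_r) identified with vectors v :: nat \<Rightarrow> real:
   coordinate j (j<n) = coefficient of H_j, coordinate n+i (i<r) = coefficient of E_i,
   other coordinates 0. *)
definition unitv :: "nat \<Rightarrow> nat \<Rightarrow> real" where
  "unitv k = (\<lambda>l. if l = k then 1 else 0)"

definition gen_cone :: "(nat \<Rightarrow> real) set \<Rightarrow> (nat \<Rightarrow> real) set" where
  "gen_cone G = {v. \<exists>T w. finite T \<and> T \<subseteq> G \<and> (\<forall>g\<in>T. 0 \<le> w g) \<and>
                        v = (\<lambda>k. \<Sum>g\<in>T. w g * g k)}"

(* classes of effective divisors on the blow-up of (P^1)^n at the points
   q_i = (x(i,0),...,x(i,n-1)), i<r: the E_i, and the classes
   sum_j a_j H_j - sum_i m_i E_i of (total transforms minus exceptional parts of)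
   hypersurfaces of multidegree a with multiplicity \<ge> m_i at q_i. *)
definition eff_gens :: "nat \<Rightarrow> nat \<Rightarrow> (nat \<times> nat \<Rightarrow> complex) \<Rightarrow> (nat \<Rightarrow> real) set" where
  "eff_gens n r x =
     {unitv (n + i) | i. i < r} \<union>
     {v. \<exists>a m c. (\<exists>e\<in>exps n a. c e \<noteq> 0) \<and>
                 (\<forall>i<r. mult_ge n a c (\<lambda>j. x (i, j)) (m i)) \<and>
                 v = (\<lambda>k. if k < n then real (a k)
                          else if k < n + r then - real (m (k - n)) else 0)}"

definition pseff :: "nat \<Rightarrow> nat \<Rightarrow> (nat \<times> nat \<Rightarrow> complex) \<Rightarrow> (nat \<Rightarrow> real) set" where
  "pseff n r x = closure (gen_cone (eff_gens n r x))"

definition cone_fibers :: "nat \<Rightarrow> nat \<Rightarrow> (nat \<Rightarrow> real) set" where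
  "cone_fibers n r = gen_cone
     ({unitv (n + i) | i. i < r} \<union>
      {(\<lambda>k. unitv j k - unitv (n + i) k) | j i. j < n \<and> i < r})"

definition fiber_generated :: "nat \<Rightarrow> nat \<Rightarrow> (nat \<times> nat \<Rightarrow> complex) \<Rightarrow> bool" where
  "fiber_generated n r x \<longleftrightarrow> pseff n r x = cone_fibers n r"

end

theory Submission
  imports Defs "HOL-Computational_Algebra.Polynomial"
begin


lemma exps_0: "exps 0 a = {\<lambda>_. 0}"
  by (auto simp: exps_def)

lemma exps_Suc: "exps (Suc n) a = (\<lambda>(k,e). e(n:=k)) ` ({..a n} \<times> exps n a)"
proof (intro set_eqI iffI)
  fix e assume e: "e \<in> exps (Suc n) a"
  then have "e = (\<lambda>(k,e). e(n:=k)) (e n, e(n:=0))" by auto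
  moreover have "(e n, e(n:=0)) \<in> {..a n} \<times> exps n a"
    using e by (auto simp: exps_def)
  ultimately show "e \<in> (\<lambda>(k,e). e(n:=k)) ` ({..a n} \<times> exps n a)" by blast
next
  fix e assume "e \<in> (\<lambda>(k,e). e(n:=k)) ` ({..a n} \<times> exps n a)"
  then show "e \<in> exps (Suc n) a" by (auto simp: exps_def less_Suc_eq)
qed

lemma exps_zero: "e \<in> exps n a \<Longrightarrow> j \<ge> n \<Longrightarrow> e j = 0"
  by (auto simp: exps_def)

lemma exps_Suc_inj: "inj_on (\<lambda>(k,e). e(n:=k)) ({..a n} \<times> exps n a)"
proof (rule inj_onI)
  fix x y assume x: "x \<in> {..a n} \<times> exps n a" and y: "y \<in> {..a n} \<times> exps n a"
    and xy: "(\<lambda>(k,e). e(n:=k)) x = (\<lambda>(k,e). e(n:=k)) y"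
  obtain k e k' e' where xe: "x = (k,e)" and ye: "y = (k',e')" by fastforce
  have a: "(k, e) \<in> {..a n} \<times> exps n a" "(k', e') \<in> {..a n} \<times> exps n a"
    "e(n := k) = e'(n := k')" using x y xy xe ye by auto
  have "k = k'" using fun_cong[OF a(3), of n] by simp
  moreover have "e j = e' j" for j
  proof (cases "j = n")
    case True then show ?thesis using a(1,2) exps_zero[of e n a n] exps_zero[of e' n a n] by simp
  next
    case False then show ?thesis using fun_cong[OF a(3), of j] by simp
  qed
  ultimately show "x = y" using xe ye by auto
qed

lemma finite_exps: "finite (exps n a)"
  by (induction n) (auto simp: exps_0 exps_Suc)

lemma sum_exps_Suc:
  "(\<Sum>e\<in>exps (Suc n) a. F e) = (\<Sum>k\<le>a n. \<Sum>e\<in>exps n a. F (e(n:=k)))"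
  unfolding exps_Suc sum.reindex[OF exps_Suc_inj] sum.cartesian_product by (simp add: split_beta)


lemma prod_sum_exps:
  fixes f :: "nat \<Rightarrow> nat \<Rightarrow> 'a::comm_semiring_1"
  shows "(\<Prod>j<n. \<Sum>k\<le>a j. f j k) = (\<Sum>b\<in>exps n a. \<Prod>j<n. f j (b j))"
proof (induction n)
  case 0 then show ?case by (simp add: exps_0)
next
  case (Suc n)
  have "(\<Prod>j<Suc n. \<Sum>k\<le>a j. f j k) = (\<Sum>b\<in>exps n a. \<Prod>j<n. f j (b j)) * (\<Sum>k\<le>a n. f n k)"
    by (simp add: Suc)
  also have "\<dots> = (\<Sum>k\<le>a n. \<Sum>b\<in>exps n a. (\<Prod>j<n. f j (b j)) * f n k)"
    by (simp add: sum_distrib_left sum_distrib_right sum.swap[where A="exps n a"])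
  also have "\<dots> = (\<Sum>b\<in>exps (Suc n) a. \<Prod>j<Suc n. f j (b j))"
    unfolding sum_exps_Suc
  proof (intro sum.cong refl)
    fix k b
    have "(\<Prod>j<n. f j ((b(n:=k)) j)) = (\<Prod>j<n. f j (b j))"
      by (intro prod.cong) auto
    then show "(\<Prod>j<n. f j (b j)) * f n k = (\<Prod>j<Suc n. f j ((b(n := k)) j))"
      by simp
  qed
  finally show ?case .
qed

lemma binom_shift:
  fixes P U W :: "'a::comm_semiring_1"
  assumes "e \<le> a"
  shows "(P*U + W)^e * U^(a-e) = (\<Sum>k\<le>a. of_nat (e choose k) * P^(e-k) * W^k * U^(a-k))"
proof -
  have "(P*U + W)^e = (\<Sum>k\<le>e. of_nat (e choose k) * W^k * (P*U)^(e-k))"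
    using binomial_ring[of W "P*U" e] by (simp add: add.commute)
  then have "(P*U + W)^e * U^(a-e) = (\<Sum>k\<le>e. of_nat (e choose k) * W^k * (P*U)^(e-k) * U^(a-e))"
    by (simp add: sum_distrib_right)
  also have "\<dots> = (\<Sum>k\<le>e. of_nat (e choose k) * P^(e-k) * W^k * U^(a-k))"
  proof (intro sum.cong refl)
    fix k assume "k \<in> {..e}"
    then have "a - k = (e - k) + (a - e)" using assms by auto
    then show "of_nat (e choose k) * W^k * (P*U)^(e-k) * U^(a-e) = of_nat (e choose k) * P^(e-k) * W^k * U^(a-k)"
      by (simp add: power_add power_mult_distrib mult_ac)
  qed
  also have "\<dots> = (\<Sum>k\<le>a. of_nat (e choose k) * P^(e-k) * W^k * U^(a-k))"
    using assms by (intro sum.mono_neutral_left) (auto simp: binomial_eq_0 not_le)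
  finally show ?thesis .
qed

lemma taylor_id:
  fixes C :: "(nat\<Rightarrow>nat) \<Rightarrow> 'a::comm_semiring_1" and P U W :: "nat \<Rightarrow> 'a"
  shows "(\<Sum>e\<in>exps n a. C e * (\<Prod>j<n. (P j * U j + W j)^e j * U j^(a j - e j))) =
    (\<Sum>b\<in>exps n a. (\<Sum>e\<in>exps n a. C e * (\<Prod>j<n. of_nat (e j choose b j) * P j^(e j - b j)))
        * (\<Prod>j<n. W j ^ b j * U j ^ (a j - b j)))"
proof -
  have "(\<Sum>e\<in>exps n a. C e * (\<Prod>j<n. (P j * U j + W j)^e j * U j^(a j - e j))) =
     (\<Sum>e\<in>exps n a. C e * (\<Sum>b\<in>exps n a. \<Prod>j<n. of_nat (e j choose b j) * P j^(e j - b j) * W j^b j * U j^(a j - b j)))"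
  proof (intro sum.cong refl arg_cong2[where f="(*)"])
    fix e assume e: "e \<in> exps n a"
    have "(\<Prod>j<n. (P j * U j + W j)^e j * U j^(a j - e j)) =
        (\<Prod>j<n. \<Sum>k\<le>a j. of_nat (e j choose k) * P j^(e j-k) * W j^k * U j^(a j-k))"
      using e by (intro prod.cong refl binom_shift) (auto simp: exps_def)
    also have "\<dots> = (\<Sum>b\<in>exps n a. \<Prod>j<n. of_nat (e j choose b j) * P j^(e j - b j) * W j^b j * U j^(a j - b j))"
      by (rule prod_sum_exps)
    finally show "(\<Prod>j<n. (P j * U j + W j)^e j * U j^(a j - e j)) = \<dots>" .
  qed
  also have "\<dots> = (\<Sum>e\<in>exps n a. \<Sum>b\<in>exps n a. C e * ((\<Prod>j<n. of_nat (e j choose b j) * P j^(e j - b j)) * (\<Prod>j<n. W j ^ b j * U j ^ (a j - b j))))"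
    by (simp add: sum_distrib_left prod.distrib[symmetric] mult_ac)
  also have "\<dots> = (\<Sum>b\<in>exps n a. (\<Sum>e\<in>exps n a. C e * (\<Prod>j<n. of_nat (e j choose b j) * P j^(e j - b j)))
        * (\<Prod>j<n. W j ^ b j * U j ^ (a j - b j)))"
    by (subst sum.swap) (simp add: sum_distrib_left sum_distrib_right mult_ac)
  finally show ?thesis .
qed

definition feval :: "nat \<Rightarrow> (nat \<Rightarrow> nat) \<Rightarrow> ((nat \<Rightarrow> nat) \<Rightarrow> complex) \<Rightarrow> (nat \<Rightarrow> complex) \<Rightarrow> complex" where
  "feval n a c z = (\<Sum>e\<in>exps n a. c e * (\<Prod>j<n. z j ^ e j))"

lemma nonvanish:
  assumes "finite B" "\<exists>e\<in>exps n a. c e \<noteq> 0"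
  shows "\<exists>z. (\<forall>j<n. z j \<notin> B) \<and> feval n a c z \<noteq> 0"
  using assms(2)
proof (induction n arbitrary: c)
  case 0
  then show ?case by (auto simp: feval_def exps_0)
next
  case (Suc n)
  then obtain e where e: "e \<in> exps (Suc n) a" "c e \<noteq> 0" by blast
  define k0 where "k0 = e n"
  have k0: "k0 \<le> a n" using e(1) by (auto simp: exps_def k0_def)
  have e0: "e(n:=0) \<in> exps n a" using e(1) by (auto simp: exps_def less_Suc_eq)
  have "(e(n:=0))(n:=k0) = e" by (auto simp: k0_def)
  then have "\<exists>e'\<in>exps n a. (\<lambda>e'. c (e'(n:=k0))) e' \<noteq> 0" using e0 e(2) by metis
  from Suc.IH[OF this] obtain z' where z': "\<forall>j<n. z' j \<notin> B" "feval n a (\<lambda>e'. c (e'(n:=k0))) z' \<noteq> 0"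
    by blast
  define s where "s k = feval n a (\<lambda>e'. c (e'(n:=k))) z'" for k
  define Q where "Q = (\<Sum>k\<le>a n. monom (s k) k)"
  have "coeff Q k0 = s k0"
    using k0 by (simp add: Q_def coeff_sum coeff_monom)
  then have "Q \<noteq> 0" using z'(2) by (auto simp: s_def)
  then have "finite (B \<union> {t. poly Q t = 0})" using assms(1) poly_roots_finite by blast
  then obtain t where t: "t \<notin> B \<union> {t. poly Q t = 0}"
    using ex_new_if_finite[OF infinite_UNIV_char_0] by blast
  define z where "z = z'(n:=t)"
  have "feval (Suc n) a c z = (\<Sum>k\<le>a n. s k * t ^ k)"
    unfolding feval_def sum_exps_Suc s_def
  proof (intro sum.cong refl)
    fix k
    show "(\<Sum>e\<in>exps n a. c (e(n := k)) * (\<Prod>j<Suc n. z j ^ (e(n := k)) j)) =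
          (\<Sum>e\<in>exps n a. c (e(n := k)) * (\<Prod>j<n. z' j ^ e j)) * t ^ k"
      unfolding sum_distrib_right
    proof (intro sum.cong refl)
      fix e
      have "(\<Prod>j<n. z j ^ (e(n := k)) j) = (\<Prod>j<n. z' j ^ e j)"
        by (intro prod.cong) (auto simp: z_def)
      then show "c (e(n := k)) * (\<Prod>j<Suc n. z j ^ (e(n := k)) j) = c (e(n := k)) * (\<Prod>j<n. z' j ^ e j) * t ^ k"
        by (simp add: z_def)
    qed
  qed
  also have "\<dots> = poly Q t" by (simp add: Q_def poly_sum poly_monom)
  finally have "feval (Suc n) a c z \<noteq> 0" using t by simp
  moreover have "\<forall>j<Suc n. z j \<notin> B" using z' t by (auto simp: z_def less_Suc_eq)
  ultimately show ?case by blast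
qed

lemma cp_add: "[:a+b:] = [:a:] + [:b:]"
  by simp

lemma cp_mult: "[:a*b:] = [:a:] * [:b:]"
  by (rule mult_to_poly[symmetric])

lemma cp_sum: "[:sum f A:] = (\<Sum>x\<in>A. [:f x:])"
proof (induction A rule: infinite_finite_induct)
  case (insert x F)
  have "[:sum f (insert x F):] = [:f x:] + [:sum f F:]" unfolding sum.insert[OF insert(1,2)] by (rule cp_add)
  then show ?case using insert by simp
qed auto

lemma cp_prod: "[:prod f A:] = (\<Prod>x\<in>A. [:f x:])"
proof (induction A rule: infinite_finite_induct)
  case (insert x F)
  have "[:prod f (insert x F):] = [:f x:] * [:prod f F:]" unfolding prod.insert[OF insert(1,2)] by (rule cp_mult)
  then show ?case using insert by simp
qed (auto simp: one_pCons)

lemma hasse_const: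
  "(\<Sum>e\<in>exps n a. [:c e:] * (\<Prod>j<n. of_nat (e j choose b j) * [:pp j:]^(e j - b j))) = [:hasse n a c b pp:]"
  unfolding hasse_def cp_sum
  by (simp add: cp_prod mult_to_poly[symmetric] poly_const_pow[symmetric] of_nat_poly[symmetric])

lemma main_bound:
  fixes p q :: "nat \<Rightarrow> complex"
  assumes pq: "\<forall>j<n. p j \<noteq> q j" and nz: "\<exists>e\<in>exps n a. c e \<noteq> 0"
    and m1: "mult_ge n a c p m1" and m2: "mult_ge n a c q m2"
  shows "m1 + m2 \<le> (\<Sum>j<n. a j)"
proof -
  obtain z where z: "\<forall>j<n. z j \<notin> q ` {..<n}" "feval n a c z \<noteq> 0"
    using nonvanish[OF _ nz, of "q ` {..<n}"] by blast
  have zq: "z j \<noteq> q j" if "j < n" for j using z(1) that by auto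
  define l where "l j = (z j - p j)/(q j - z j)" for j
  define U where "U j = [:1, l j:]" for j
  define G where "G = (\<Sum>e\<in>exps n a. [:c e:] * (\<Prod>j<n. [:p j, q j * l j:]^e j * U j^(a j - e j)))"
  have Gp: "G = (\<Sum>b\<in>exps n a. [:hasse n a c b p:] * (\<Prod>j<n. [:0, (q j - p j) * l j:] ^ b j * U j ^ (a j - b j)))"
  proof -
    have "G = (\<Sum>e\<in>exps n a. [:c e:] * (\<Prod>j<n. ([:p j:] * U j + [:0, (q j - p j) * l j:])^e j * U j^(a j - e j)))"
      unfolding G_def U_def by (simp add: algebra_simps)
    then show ?thesis unfolding taylor_id hasse_const .
  qed
  have Gq: "G = (\<Sum>b\<in>exps n a. [:hasse n a c b q:] * (\<Prod>j<n. [:p j - q j:] ^ b j * U j ^ (a j - b j)))"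
  proof -
    have "G = (\<Sum>e\<in>exps n a. [:c e:] * (\<Prod>j<n. ([:q j:] * U j + [:p j - q j:])^e j * U j^(a j - e j)))"
      unfolding G_def U_def by (simp add: algebra_simps)
    then show ?thesis unfolding taylor_id hasse_const .
  qed
  have "poly G 1 = (\<Sum>e\<in>exps n a. c e * (\<Prod>j<n. (z j ^ e j) * (1 + l j) ^ a j))"
    unfolding G_def poly_sum
  proof (intro sum.cong refl)
    fix e assume e: "e \<in> exps n a"
    have "(\<Prod>j<n. (p j + q j * l j) ^ e j * (1 + l j) ^ (a j - e j)) = (\<Prod>j<n. (z j ^ e j) * (1 + l j) ^ a j)"
    proof (intro prod.cong refl)
      fix j assume j: "j \<in> {..<n}"
      then have "q j - z j \<noteq> 0" using zq[of j] by auto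
      then have "p j + q j * l j = z j * (1 + l j)" by (simp add: l_def field_simps)
      moreover have "a j = e j + (a j - e j)" using e j by (auto simp: exps_def)
      ultimately show "(p j + q j * l j) ^ e j * (1 + l j) ^ (a j - e j) = (z j ^ e j) * (1 + l j) ^ a j"
        by (metis power_add power_mult_distrib mult.assoc)
    qed
    then show "poly ([:c e:] * (\<Prod>j<n. [:p j, q j * l j:] ^ e j * U j ^ (a j - e j))) 1 =
        c e * (\<Prod>j<n. z j ^ e j * (1 + l j) ^ a j)"
      by (simp add: poly_prod U_def)
  qed
  also have "\<dots> = (\<Prod>j<n. (1 + l j) ^ a j) * feval n a c z"
    by (simp add: feval_def sum_distrib_left prod.distrib mult_ac)
  finally have "poly G 1 = (\<Prod>j<n. (1 + l j) ^ a j) * feval n a c z" .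
  moreover have "(\<Prod>j<n. (1 + l j) ^ a j) \<noteq> 0"
  proof -
    have "1 + l j \<noteq> 0" if "j < n" for j
    proof -
      have "q j - z j \<noteq> 0" "q j - p j \<noteq> 0" using zq[OF that] pq that by auto
      then have "1 + l j = (q j - p j) / (q j - z j)" by (simp add: l_def field_simps)
      then show ?thesis using \<open>q j - z j \<noteq> 0\<close> \<open>q j - p j \<noteq> 0\<close> by simp
    qed
    then show ?thesis by simp
  qed
  ultimately have "poly G 1 \<noteq> 0" using z(2) by simp
  then have G0: "G \<noteq> 0" by auto
  have sb: "(\<Sum>j<n. b j) \<le> (\<Sum>j<n. a j)" if "b \<in> exps n a" for b
    using that by (intro sum_mono) (auto simp: exps_def)
  have hz: "hasse n a c b pp = 0" if "mult_ge n a c pp m" "b \<in> exps n a" "(\<Sum>j<n. b j) < m" for pp m b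
    using that by (auto simp: mult_ge_def exps_def)
  have "[:0,1:]^m1 dvd G"
    unfolding Gp
  proof (intro dvd_sum)
    fix b assume b: "b \<in> exps n a"
    show "[:0,1:]^m1 dvd [:hasse n a c b p:] * (\<Prod>j<n. [:0, (q j - p j) * l j:] ^ b j * U j ^ (a j - b j))"
    proof (cases "(\<Sum>j<n. b j) < m1")
      case True then show ?thesis using hz[OF m1 b] by simp
    next
      case False
      have "[:0,1:]^m1 dvd [:0,1:]^(\<Sum>j<n. b j)" using False by (intro le_imp_power_dvd) simp
      also have "\<dots> = (\<Prod>j<n. [:0,1:]^b j)" by (rule power_sum)
      also have "\<dots> dvd (\<Prod>j<n. [:0, (q j - p j) * l j:] ^ b j * U j ^ (a j - b j))"
      proof (intro prod_dvd_prod dvd_mult2 dvd_power_same)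
        fix j
        have "[:0, (q j - p j) * l j:] = [:0,1:] * [:(q j - p j) * l j:]" by simp
        then show "[:0,1:] dvd [:0, (q j - p j) * l j:]" by (metis dvd_triv_left)
      qed
      finally show ?thesis by (rule dvd_mult)
    qed
  qed
  then have "degree ([:0,1::complex:]^m1) \<le> degree G" by (rule dvd_imp_degree_le[OF _ G0])
  then have d1: "m1 \<le> degree G" by (simp only: degree_linear_power)
  have m2a: "m2 \<le> (\<Sum>j<n. a j)"
  proof (rule ccontr)
    assume "\<not> ?thesis"
    then have "hasse n a c b q = 0" if "b \<in> exps n a" for b
      using hz[OF m2 that] sb[OF that] by simp
    then have "G = 0" unfolding Gq by simp
    then show False using G0 by simp
  qed
  have "degree G \<le> (\<Sum>j<n. a j) - m2"
    unfolding Gq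
  proof (intro degree_sum_le finite_exps)
    fix b assume b: "b \<in> exps n a"
    show "degree ([:hasse n a c b q:] * (\<Prod>j<n. [:p j - q j:] ^ b j * U j ^ (a j - b j))) \<le> (\<Sum>j<n. a j) - m2"
    proof (cases "(\<Sum>j<n. b j) < m2")
      case True then show ?thesis using hz[OF m2 b] by simp
    next
      case False
      have "degree ([:hasse n a c b q:] * (\<Prod>j<n. [:p j - q j:] ^ b j * U j ^ (a j - b j)))
          \<le> degree (\<Prod>j<n. [:p j - q j:] ^ b j * U j ^ (a j - b j))"
        using degree_mult_le[of "[:hasse n a c b q:]" "\<Prod>j<n. [:p j - q j:] ^ b j * U j ^ (a j - b j)"] by simp
      also have "\<dots> \<le> (\<Sum>j<n. degree ([:p j - q j:] ^ b j * U j ^ (a j - b j)))"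
        using degree_prod_sum_le[of "{..<n}"] by (simp add: o_def)
      also have "\<dots> \<le> (\<Sum>j<n. a j - b j)"
      proof (intro sum_mono)
        fix j
        have "degree ([:p j - q j:] ^ b j * U j ^ (a j - b j)) \<le> degree ([:p j - q j:] ^ b j) + degree (U j ^ (a j - b j))"
          by (rule degree_mult_le)
        also have "\<dots> \<le> 0 + degree (U j) * (a j - b j)"
          by (intro add_mono degree_power_le) (simp add: poly_const_pow)
        also have "\<dots> \<le> a j - b j" by (simp add: U_def)
        finally show "degree ([:p j - q j:] ^ b j * U j ^ (a j - b j)) \<le> a j - b j" .
      qed
      also have "\<dots> = (\<Sum>j<n. a j) - (\<Sum>j<n. b j)"
        using b by (intro sum_subtractf_nat) (auto simp: exps_def)
      also have "\<dots> \<le> (\<Sum>j<n. a j) - m2" using False by simp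
      finally show ?thesis .
    qed
  qed
  then show ?thesis using d1 m2a by linarith
qed



lemma gen_cone_base: "g \<in> G \<Longrightarrow> g \<in> gen_cone G"
  unfolding gen_cone_def
  by (rule CollectI, rule exI[of _ "{g}"], rule exI[of _ "\<lambda>_. 1"]) auto

lemma gen_cone_mono: "G \<subseteq> H \<Longrightarrow> gen_cone G \<subseteq> gen_cone H"
  unfolding gen_cone_def by blast

lemma gen_cone_zero: "(\<lambda>k. 0) \<in> gen_cone G"
  unfolding gen_cone_def
  by (rule CollectI, rule exI[of _ "{}"], rule exI[of _ "\<lambda>_. 1"]) auto

lemma gen_cone_smult:
  assumes "v \<in> gen_cone G" "0 \<le> c"
  shows "(\<lambda>k. c * v k) \<in> gen_cone G"
proof -
  obtain T w where T: "finite T" "T \<subseteq> G" "\<forall>g\<in>T. 0 \<le> w g" "v = (\<lambda>k. \<Sum>g\<in>T. w g * g k)"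
    using assms(1) unfolding gen_cone_def by blast
  show ?thesis unfolding gen_cone_def
    apply (rule CollectI, rule exI[of _ T], rule exI[of _ "\<lambda>g. c * w g"])
    using T assms(2) by (auto simp: sum_distrib_left mult_ac)
qed

lemma gen_cone_add:
  assumes "v \<in> gen_cone G" "u \<in> gen_cone G"
  shows "(\<lambda>k. v k + u k) \<in> gen_cone G"
proof -
  obtain T w where T: "finite T" "T \<subseteq> G" "\<forall>g\<in>T. 0 \<le> w g" "v = (\<lambda>k. \<Sum>g\<in>T. w g * g k)"
    using assms(1) unfolding gen_cone_def by blast
  obtain T' w' where T': "finite T'" "T' \<subseteq> G" "\<forall>g\<in>T'. 0 \<le> w' g" "u = (\<lambda>k. \<Sum>g\<in>T'. w' g * g k)"
    using assms(2) unfolding gen_cone_def by blast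
  define W where "W g = (if g \<in> T then w g else 0) + (if g \<in> T' then w' g else 0)" for g
  have "(\<Sum>g\<in>T \<union> T'. W g * g k) = v k + u k" for k
  proof -
    have "(\<Sum>g\<in>T \<union> T'. W g * g k) = (\<Sum>g\<in>T \<union> T'. (if g \<in> T then w g * g k else 0)) + (\<Sum>g\<in>T \<union> T'. (if g \<in> T' then w' g * g k else 0))"
      unfolding sum.distrib[symmetric] by (intro sum.cong) (auto simp: W_def algebra_simps)
    also have "\<dots> = (\<Sum>g\<in>T. w g * g k) + (\<Sum>g\<in>T'. w' g * g k)"
      using T(1) T'(1) by (simp add: sum.If_cases Int_absorb1 Int_absorb2)
    finally show ?thesis using T(4) T'(4) by simp
  qed
  then show ?thesis unfolding gen_cone_def
    apply (intro CollectI exI[of _ "T \<union> T'"] exI[of _ W])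
    using T T' by (auto simp: W_def)
qed

lemma gen_cone_sum:
  assumes "finite I" "\<And>i. i \<in> I \<Longrightarrow> f i \<in> gen_cone G"
  shows "(\<lambda>k. \<Sum>i\<in>I. f i k) \<in> gen_cone G"
  using assms
proof (induction I rule: finite_induct)
  case empty then show ?case using gen_cone_zero by simp
next
  case (insert x F)
  then show ?case using gen_cone_add[of "f x" G "\<lambda>k. \<Sum>i\<in>F. f i k"] by simp
qed

lemma gen_cone_lin:
  assumes "finite K" "\<forall>g\<in>G. 0 \<le> (\<Sum>k\<in>K. cf k * g k)" "v \<in> gen_cone G"
  shows "0 \<le> (\<Sum>k\<in>K. cf k * v k)"
proof -
  obtain T w where T: "finite T" "T \<subseteq> G" "\<forall>g\<in>T. 0 \<le> w g" "v = (\<lambda>k. \<Sum>g\<in>T. w g * g k)"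
    using assms(3) unfolding gen_cone_def by blast
  have "(\<Sum>k\<in>K. cf k * v k) = (\<Sum>g\<in>T. w g * (\<Sum>k\<in>K. cf k * g k))"
    unfolding T(4) by (simp add: sum_distrib_left sum.swap[of _ K] mult_ac)
  also have "\<dots> \<ge> 0"
  proof (rule sum_nonneg)
    fix g assume "g \<in> T"
    then show "0 \<le> w g * (\<Sum>k\<in>K. cf k * g k)" using T(2,3) assms(2)
      by (intro mult_nonneg_nonneg) auto
  qed
  finally show ?thesis .
qed

lemma closed_lin: "closed {v::nat\<Rightarrow>real. 0 \<le> (\<Sum>k\<in>K. cf k * v k)}"
  by (intro closed_Collect_le continuous_on_const continuous_on_sum continuous_on_mult continuous_on_product_coordinates)

lemma sum_split_nr: "(\<Sum>k<n+r. g k) = (\<Sum>k<n. g k) + (\<Sum>i<r. g (n+i::nat))"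
  by (induction r) (auto simp: add.assoc)

lemma sum_unitv1: "(\<Sum>j<n. f j * unitv j k) = (if k < n then f k else 0)"
  by (simp add: unitv_def if_distrib[of "(*) _"] sum.delta' cong: if_cong)

lemma sum_unitv2: "(\<Sum>i<r. f i * unitv (n+i) k) = (if n \<le> k \<and> k < n + r then f (k-n) else 0)"
proof -
  have "(\<Sum>i<r. f i * unitv (n+i) k) = (\<Sum>i<r. if i = k - n \<and> n \<le> k then f i else 0)"
    by (intro sum.cong) (auto simp: unitv_def)
  also have "\<dots> = (if n \<le> k \<and> k < n + r then f (k-n) else 0)"
    by (cases "n \<le> k") (auto simp: sum.delta')
  finally show ?thesis .
qed

definition cS :: "nat \<Rightarrow> nat set \<Rightarrow> nat \<Rightarrow> real" where
  "cS n S k = (if k < n \<or> k - n \<in> S then 1 else 0)"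

lemma lin_S:
  assumes "S \<subseteq> {..<r}"
  shows "(\<Sum>k<n+r. cS n S k * v k) = (\<Sum>j<n. v j) + (\<Sum>i\<in>S. v (n+i))"
proof -
  have "(\<Sum>i<r. cS n S (n+i) * v (n+i)) = (\<Sum>i<r. if i \<in> S then v (n+i) else 0)"
    by (intro sum.cong) (auto simp: cS_def)
  also have "\<dots> = (\<Sum>i\<in>{..<r} \<inter> S. v (n+i))" by (simp add: sum.inter_restrict)
  also have "{..<r} \<inter> S = S" using assms by auto
  finally show ?thesis unfolding sum_split_nr by (simp add: cS_def)
qed

definition Lset :: "nat \<Rightarrow> nat \<Rightarrow> (nat set \<times> (nat \<Rightarrow> real)) set" where
  "Lset n r = {({k}, \<lambda>_. 1) | k. n+r \<le> k} \<union> {({k}, \<lambda>_. -1) | k. n+r \<le> k} \<union>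
     {({j}, \<lambda>_. 1) | j. j<n} \<union> {({..<n+r}, cS n S) | S. S \<subseteq> {..<r}}"

definition Dset :: "nat \<Rightarrow> nat \<Rightarrow> (nat \<Rightarrow> real) set" where
  "Dset n r = {v. \<forall>L\<in>Lset n r. 0 \<le> (\<Sum>k\<in>fst L. snd L k * v k)}"

lemma ball_setcompr: "(\<forall>L\<in>{f x | x. P x}. Q L) \<longleftrightarrow> (\<forall>x. P x \<longrightarrow> Q (f x))"
  by blast

lemma Dset_iff: "v \<in> Dset n r \<longleftrightarrow> (\<forall>k. n+r \<le> k \<longrightarrow> v k = 0) \<and> (\<forall>j<n. 0 \<le> v j) \<and>
   (\<forall>S. S \<subseteq> {..<r} \<longrightarrow> 0 \<le> (\<Sum>j<n. v j) + (\<Sum>i\<in>S. v (n+i)))"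
proof -
  have 1: "v \<in> Dset n r \<longleftrightarrow> (\<forall>k\<ge>n+r. 0 \<le> v k) \<and> (\<forall>k\<ge>n+r. v k \<le> 0) \<and> (\<forall>j<n. 0 \<le> v j) \<and>
   (\<forall>S\<subseteq>{..<r}. 0 \<le> (\<Sum>k<n+r. cS n S k * v k))"
    unfolding Dset_def Lset_def ball_Un ball_setcompr by simp
  have 2: "(\<forall>S\<subseteq>{..<r}. 0 \<le> (\<Sum>k<n+r. cS n S k * v k)) \<longleftrightarrow>
      (\<forall>S. S \<subseteq> {..<r} \<longrightarrow> 0 \<le> (\<Sum>j<n. v j) + (\<Sum>i\<in>S. v (n+i)))"
    by (simp add: lin_S)
  have 3: "(\<forall>k\<ge>n+r. 0 \<le> v k) \<and> (\<forall>k\<ge>n+r. v k \<le> 0) \<longleftrightarrow> (\<forall>k. n+r \<le> k \<longrightarrow> v k = 0)"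
    by (auto intro: order.antisym)
  show ?thesis using 1 2 3 by blast
qed

lemma closed_Dset: "closed (Dset n r)"
proof -
  have "Dset n r = (\<Inter>L\<in>Lset n r. {v. 0 \<le> (\<Sum>k\<in>fst L. snd L k * v k)})"
    unfolding Dset_def by auto
  then show ?thesis by (simp add: closed_INT closed_lin)
qed

lemma finite_Lset: "L \<in> Lset n r \<Longrightarrow> finite (fst L)"
  unfolding Lset_def by auto

lemma cone_sub_Dset: "G \<subseteq> Dset n r \<Longrightarrow> gen_cone G \<subseteq> Dset n r"
proof
  fix v assume G: "G \<subseteq> Dset n r" and v: "v \<in> gen_cone G"
  show "v \<in> Dset n r" unfolding Dset_def
  proof (intro CollectI ballI)
    fix L assume L: "L \<in> Lset n r"
    show "0 \<le> (\<Sum>k\<in>fst L. snd L k * v k)"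
      by (rule gen_cone_lin[OF finite_Lset[OF L] _ v]) (use G L in \<open>auto simp: Dset_def\<close>)
  qed
qed

definition CFgens :: "nat \<Rightarrow> nat \<Rightarrow> (nat \<Rightarrow> real) set" where
  "CFgens n r = {unitv (n + i) | i. i < r} \<union>
      {(\<lambda>k. unitv j k - unitv (n + i) k) | j i. j < n \<and> i < r}"

lemma cone_fibers_alt: "cone_fibers n r = gen_cone (CFgens n r)"
  unfolding cone_fibers_def CFgens_def ..



lemma D_sub_CF:
  assumes r: "r \<ge> 1" and v: "v \<in> Dset n r"
  shows "v \<in> cone_fibers n r"
proof -
  have vz: "v k = 0" if "n + r \<le> k" for k using v that unfolding Dset_iff by blast
  have vnn: "0 \<le> v j" if "j < n" for j using v that unfolding Dset_iff by blast
  have vS: "0 \<le> (\<Sum>j<n. v j) + (\<Sum>i\<in>S. v (n+i))" if "S \<subseteq> {..<r}" for S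
    using v that unfolding Dset_iff by blast
  define A where "A = (\<Sum>j<n. v j)"
  define b where "b i = v (n+i)" for i
  define M where "M i = (if b i < 0 then - b i else 0)" for i
  define Ms where "Ms = (\<Sum>i<r. M i)"
  define S0 where "S0 = {i\<in>{..<r}. b i < 0}"
  have "(\<Sum>i\<in>S0. b i) = - Ms"
  proof -
    have "Ms = (\<Sum>i\<in>{..<r} \<inter> {i. b i < 0}. - b i)"
      unfolding Ms_def M_def by (simp add: sum.inter_restrict)
    moreover have "{..<r} \<inter> {i. b i < 0} = S0" by (auto simp: S0_def)
    ultimately show ?thesis by (simp only: sum_negf)
  qed
  moreover have "0 \<le> A + (\<Sum>i\<in>S0. b i)" unfolding A_def b_def by (rule vS) (auto simp: S0_def)
  ultimately have MA: "Ms \<le> A" by simp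
  have Mnn: "0 \<le> M i" for i by (simp add: M_def)
  have A0: "0 \<le> A" unfolding A_def using vnn by (intro sum_nonneg) auto
  define th where "th i = (if A = 0 then 1 / real r else M i / A + (1 - Ms / A) / real r)" for i
  have rpos: "real r > 0" using r by simp
  have sth: "(\<Sum>i<r. th i) = 1"
  proof (cases "A = 0")
    case True then show ?thesis using rpos by (simp add: th_def)
  next
    case False
    have "(\<Sum>i<r. th i) = (\<Sum>i<r. M i) / A + real r * ((1 - Ms / A) / real r)"
      using False by (simp add: th_def sum.distrib sum_divide_distrib)
    also have "\<dots> = 1" using rpos False by (simp add: Ms_def)
    finally show ?thesis .
  qed
  have thnn: "0 \<le> th i" for i
  proof (cases "A = 0")
    case True then show ?thesis by (simp add: th_def)
  next
    case False
    then have "A > 0" using A0 by simp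
    then have "0 \<le> 1 - Ms / A" using MA by (simp add: field_simps)
    then show ?thesis using False \<open>A > 0\<close> Mnn[of i] by (simp add: th_def)
  qed
  define u where "u i = b i + A * th i" for i
  have unn: "0 \<le> u i" if ir: "i < r" for i
  proof (cases "A = 0")
    case True
    then have "Ms \<le> 0" using MA by simp
    moreover have "0 \<le> Ms" unfolding Ms_def using Mnn by (intro sum_nonneg) auto
    ultimately have "(\<Sum>i<r. M i) = 0" unfolding Ms_def by simp
    then have "\<forall>i\<in>{..<r}. M i = 0" using sum_nonneg_eq_0_iff[of "{..<r}" M] Mnn by simp
    then have "M i = 0" if "i < r" using that by simp
    then have "b i \<ge> 0" if "i < r" using that by (auto simp: M_def split: if_splits)
    then show ?thesis using True ir by (simp add: u_def)
  next
    case False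
    then have "A > 0" using A0 by simp
    have e1: "A * ((1 - Ms/A)/real r) = (A - Ms)/real r" using False rpos by (simp add: field_simps)
    have "A * th i = M i + (A - Ms) / real r" using False e1 by (simp add: th_def distrib_left)
    moreover have "(A - Ms) / real r \<ge> 0" using MA rpos by simp
    moreover have "b i + M i \<ge> 0" by (simp add: M_def)
    ultimately show ?thesis by (simp add: u_def)
  qed
  define w where "w j i = v j * th i" for j i
  have wnn: "0 \<le> w j i" if "j < n" for j i using vnn[OF that] thnn[of i] by (simp add: w_def)
  define V where "V = (\<lambda>k. (\<Sum>i<r. u i * unitv (n+i) k) + (\<Sum>i<r. \<Sum>j<n. w j i * (unitv j k - unitv (n+i) k)))"
  have "V \<in> gen_cone (CFgens n r)"
    unfolding V_def
  proof (intro gen_cone_add gen_cone_sum finite_lessThan)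
    fix i assume "i \<in> {..<r}"
    then show "(\<lambda>k. u i * unitv (n + i) k) \<in> gen_cone (CFgens n r)"
      using unn by (intro gen_cone_smult gen_cone_base) (auto simp: CFgens_def)
  next
    fix i j assume "i \<in> {..<r}" "j \<in> {..<n}"
    then show "(\<lambda>k. w j i * (unitv j k - unitv (n + i) k)) \<in> gen_cone (CFgens n r)"
      using wnn by (intro gen_cone_smult[where v="\<lambda>k. unitv j k - unitv (n + i) k"] gen_cone_base) (auto simp: CFgens_def)
  qed
  moreover have "V = v"
  proof
    fix k
    have "(\<Sum>i<r. \<Sum>j<n. w j i * (unitv j k - unitv (n+i) k)) =
        (\<Sum>i<r. (\<Sum>j<n. w j i * unitv j k)) - (\<Sum>i<r. (\<Sum>j<n. w j i) * unitv (n+i) k)"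
      by (simp add: right_diff_distrib sum_subtractf sum_distrib_right)
    also have "\<dots> = (\<Sum>i<r. if k < n then w k i else 0) - (if n \<le> k \<and> k < n + r then (\<Sum>j<n. w j (k-n)) else 0)"
      by (simp only: sum_unitv1 sum_unitv2)
    also have "\<dots> = (if k < n then v k else 0) - (if n \<le> k \<and> k < n + r then A * th (k-n) else 0)"
      using sth by (simp add: w_def sum_distrib_left[symmetric] sum_distrib_right[symmetric] A_def)
    finally have 1: "(\<Sum>i<r. \<Sum>j<n. w j i * (unitv j k - unitv (n+i) k)) =
        (if k < n then v k else 0) - (if n \<le> k \<and> k < n + r then A * th (k-n) else 0)" .
    have 2: "(\<Sum>i<r. u i * unitv (n+i) k) = (if n \<le> k \<and> k < n + r then u (k-n) else 0)"
      by (rule sum_unitv2)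
    show "V k = v k"
    proof (cases "k < n")
      case True then show ?thesis by (simp add: V_def 1 2)
    next
      case False
      show ?thesis
      proof (cases "k < n + r")
        case True
        then have "n + (k - n) = k" using False by simp
        then show ?thesis using False True unfolding V_def 1 2 by (simp add: u_def b_def)
      next
        case False2: False
        then show ?thesis using False vz[of k] by (simp add: V_def 1 2)
      qed
    qed
  qed
  ultimately show ?thesis by (simp add: cone_fibers_alt)
qed



lemma mult_ge_0: "mult_ge n a c p 0"
  by (simp add: mult_ge_def)

lemma mult_ge_1:
  assumes "feval n a c p = 0"
  shows "mult_ge n a c p 1"
  unfolding mult_ge_def
proof (intro allI impI)
  fix beta :: "nat \<Rightarrow> nat" assume b: "(\<forall>j\<ge>n. beta j = 0) \<and> (\<Sum>j<n. beta j) < 1"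
  then have "(\<Sum>j<n. beta j) = 0" by simp
  then have "\<forall>j<n. beta j = 0" by simp
  with b have "beta = (\<lambda>_. 0)" by (auto simp: fun_eq_iff not_less[symmetric])
  then show "hasse n a c beta p = 0" using assms by (simp add: hasse_def feval_def)
qed

lemma feval_supp:
  assumes "Z \<subseteq> exps n a" "\<forall>e\<in>exps n a - Z. c e = 0"
  shows "feval n a c p = (\<Sum>e\<in>Z. c e * (\<Prod>j<n. p j ^ e j))"
  unfolding feval_def
  by (rule sum.mono_neutral_right[OF finite_exps]) (use assms in auto)

definition del :: "nat \<Rightarrow> nat \<Rightarrow> nat" where
  "del j = (\<lambda>l. if l = j then 1 else 0)"

lemma prod_del: "j < n \<Longrightarrow> (\<Prod>l<n. p l ^ del j l) = p j"
proof -
  assume j: "j < n"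
  have "(\<Prod>l<n. p l ^ del j l) = (\<Prod>l<n. if l = j then p l else 1)"
    by (intro prod.cong) (auto simp: del_def)
  also have "\<dots> = p j" using j by (simp add: prod.delta')
  finally show ?thesis .
qed

lemma del_ne_0: "del j \<noteq> (\<lambda>_. 0)"
  by (auto simp: del_def fun_eq_iff)

lemma del_exps: "j < n \<Longrightarrow> del j \<in> exps n (del j)"
  by (auto simp: exps_def del_def)

lemma zero_exps: "(\<lambda>_. 0) \<in> exps n a"
  by (auto simp: exps_def)

lemma CFgens_eff: "CFgens n r \<subseteq> eff_gens n r x"
proof
  fix g assume "g \<in> CFgens n r"
  then consider (E) i where "i < r" "g = unitv (n+i)"
    | (H) j i where "j < n" "i < r" "g = (\<lambda>k. unitv j k - unitv (n + i) k)"
    unfolding CFgens_def by blast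
  then show "g \<in> eff_gens n r x"
  proof cases
    case E then show ?thesis unfolding eff_gens_def by blast
  next
    case H
    define c where "c e = (if e = del j then 1 else if e = (\<lambda>_. 0) then - x (i,j) else 0)" for e
    define m where "m i' = (if i' = i then 1 else 0::nat)" for i'
    have nz: "\<exists>e\<in>exps n (del j). c e \<noteq> 0"
      using del_exps[OF H(1)] by (intro bexI[of _ "del j"]) (simp_all add: c_def)
    have fe: "feval n (del j) c (\<lambda>l. x (i, l)) = 0"
    proof -
      have "feval n (del j) c (\<lambda>l. x (i, l)) = (\<Sum>e\<in>{del j, \<lambda>_. 0}. c e * (\<Prod>l<n. x (i, l) ^ e l))"
        using del_exps[OF H(1)] zero_exps by (intro feval_supp) (auto simp: c_def)
      also have "\<dots> = 0" using del_ne_0[of j] prod_del[OF H(1), of "\<lambda>l. x (i, l)"] by (simp add: c_def)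
      finally show ?thesis .
    qed
    have mg: "\<forall>i'<r. mult_ge n (del j) c (\<lambda>l. x (i', l)) (m i')"
      using fe mult_ge_1 mult_ge_0 by (auto simp: m_def)
    have vv: "g = (\<lambda>k. if k < n then real (del j k) else if k < n + r then - real (m (k - n)) else 0)"
      using H by (auto simp: fun_eq_iff unitv_def del_def m_def)
    show ?thesis unfolding eff_gens_def using nz mg vv by blast
  qed
qed

definition generic :: "nat \<Rightarrow> nat \<Rightarrow> (nat \<times> nat \<Rightarrow> complex) \<Rightarrow> bool" where
  "generic n r x \<longleftrightarrow> (\<forall>i<r. \<forall>i'<r. i \<noteq> i' \<longrightarrow> (\<forall>j<n. x (i,j) \<noteq> x (i',j)))"

lemma msum_bound:
  assumes g: "generic n r x" and r: "1 \<le> r" "r \<le> 2"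
    and nz: "\<exists>e\<in>exps n a. c e \<noteq> 0" and mg: "\<forall>i<r. mult_ge n a c (\<lambda>j. x (i, j)) (m i)"
  shows "(\<Sum>i<r. m i) \<le> (\<Sum>j<n. a j)"
proof (cases "r = 1")
  case True
  have "m 0 + 0 \<le> (\<Sum>j<n. a j)"
    by (rule main_bound[where p="\<lambda>j. x (0, j)" and q="\<lambda>j. x (0, j) + 1" and c=c])
       (use nz mg True mult_ge_0 in auto)
  then show ?thesis using True by simp
next
  case False
  then have r2: "r = 2" using r by simp
  have "m 0 + m 1 \<le> (\<Sum>j<n. a j)"
    by (rule main_bound[where p="\<lambda>j. x (0, j)" and q="\<lambda>j. x (1, j)" and c=c])
       (use nz mg r2 g in \<open>auto simp: generic_def\<close>)
  then show ?thesis using r2 by (simp add: numeral_2_eq_2)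
qed

lemma eff_sub_D:
  assumes g: "generic n r x" and r: "1 \<le> r" "r \<le> 2"
  shows "eff_gens n r x \<subseteq> Dset n r"
proof
  fix v assume "v \<in> eff_gens n r x"
  then consider (E) i where "i < r" "v = unitv (n+i)"
    | (P) a m c where "\<exists>e\<in>exps n a. c e \<noteq> 0" "\<forall>i<r. mult_ge n a c (\<lambda>j. x (i, j)) (m i)"
       "v = (\<lambda>k. if k < n then real (a k) else if k < n + r then - real (m (k - n)) else 0)"
    unfolding eff_gens_def by blast
  then show "v \<in> Dset n r"
  proof cases
    case E
    have nn: "0 \<le> v k" for k using E by (simp add: unitv_def)
    show ?thesis unfolding Dset_iff
      using E nn by (auto simp: unitv_def intro!: add_nonneg_nonneg sum_nonneg)
  next
    case P
    have mb: "(\<Sum>i<r. m i) \<le> (\<Sum>j<n. a j)" by (rule msum_bound[OF g r P(1,2)])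
    have "0 \<le> (\<Sum>j<n. v j) + (\<Sum>i\<in>S. v (n+i))" if S: "S \<subseteq> {..<r}" for S
    proof -
      have "(\<Sum>j<n. v j) = real (\<Sum>j<n. a j)" by (simp add: P(3))
      moreover have "(\<Sum>i\<in>S. v (n+i)) = - real (\<Sum>i\<in>S. m i)"
      proof -
        have "(\<Sum>i\<in>S. v (n+i)) = (\<Sum>i\<in>S. - real (m i))"
          using S by (intro sum.cong) (auto simp: P(3))
        then show ?thesis by (simp add: sum_negf)
      qed
      moreover have "(\<Sum>i\<in>S. m i) \<le> (\<Sum>i<r. m i)"
        using S by (intro sum_mono2) auto
      ultimately have "(\<Sum>j<n. v j) + (\<Sum>i\<in>S. v (n+i)) = real (\<Sum>j<n. a j) - real (\<Sum>i\<in>S. m i)"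
        and "(\<Sum>i\<in>S. m i) \<le> (\<Sum>j<n. a j)" using mb by (simp_all only: of_nat_sum)
      moreover from this(2) have "real (\<Sum>i\<in>S. m i) \<le> real (\<Sum>j<n. a j)" by (rule of_nat_mono)
      ultimately show ?thesis by linarith
    qed
    then show ?thesis unfolding Dset_iff by (auto simp: P(3))
  qed
qed

lemma fg_small:
  assumes g: "generic n r x" and r: "1 \<le> r" "r \<le> 2"
  shows "fiber_generated n r x"
proof -
  have "pseff n r x \<subseteq> Dset n r"
    unfolding pseff_def
    by (intro closure_minimal closed_Dset cone_sub_Dset eff_sub_D[OF g r])
  also have "\<dots> \<subseteq> cone_fibers n r" using D_sub_CF r(1) by blast
  finally have 1: "pseff n r x \<subseteq> cone_fibers n r" .
  have "cone_fibers n r \<subseteq> gen_cone (eff_gens n r x)"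
    unfolding cone_fibers_alt by (intro gen_cone_mono CFgens_eff)
  also have "\<dots> \<subseteq> pseff n r x" unfolding pseff_def by (rule closure_subset)
  finally show ?thesis using 1 unfolding fiber_generated_def by blast
qed

lemma CF_lin: "v \<in> cone_fibers n r \<Longrightarrow> 0 \<le> (\<Sum>j<n. v j) + (\<Sum>i<r. v (n+i))"
proof -
  assume v: "v \<in> cone_fibers n r"
  have "\<forall>g\<in>CFgens n r. 0 \<le> (\<Sum>k<n+r. cS n {..<r} k * g k)"
  proof
    fix g assume "g \<in> CFgens n r"
    then consider (E) i where "i < r" "g = unitv (n+i)"
      | (H) j i where "j < n" "i < r" "g = (\<lambda>k. unitv j k - unitv (n + i) k)"
      unfolding CFgens_def by blast
    then have "0 \<le> (\<Sum>j<n. g j) + (\<Sum>i<r. g (n+i))"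
    proof cases
      case E then show ?thesis by (auto simp: unitv_def intro!: add_nonneg_nonneg sum_nonneg)
    next
      case H
      have 1: "(\<Sum>l<n. unitv j l) = 1" using H(1) by (simp add: unitv_def)
      have 2: "(\<Sum>l<n. unitv (n+i) l) = 0" by (simp add: unitv_def)
      have 3: "(\<Sum>l<r. unitv j (n+l)) = 0" using H(1) by (simp add: unitv_def)
      have 4: "(\<Sum>l<r. unitv (n+i) (n+l)) = 1" using H(2) by (simp add: unitv_def)
      show ?thesis using 1 2 3 4 by (simp add: H(3) sum_subtractf)
    qed
    then show "0 \<le> (\<Sum>k<n+r. cS n {..<r} k * g k)" by (simp add: lin_S)
  qed
  from gen_cone_lin[OF _ this v[unfolded cone_fibers_alt]]
  show ?thesis by (simp add: lin_S)
qed

lemma not_fg_large: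
  assumes g: "generic n r x" and n: "2 \<le> n" and r: "3 \<le> r"
  shows "\<not> fiber_generated n r x"
proof -
  define P where "P j = x (0, j)" for j
  define Q where "Q j = x (1, j)" for j
  define T where "T j = x (2, j)" for j
  define A where "A = (T 0 - Q 0) * (T 1 - P 1)"
  define B where "B = - (T 0 - P 0) * (T 1 - Q 1)"
  define a2 where "a2 = (\<lambda>l::nat. if l < 2 then 1 else 0::nat)"
  define z where "z = (\<lambda>l::nat. 0::nat)"
  define c where "c e = (if e = a2 then A + B else if e = del 0 then - A * Q 1 - B * P 1
     else if e = del 1 then - A * P 0 - B * Q 0 else if e = z then A * P 0 * Q 1 + B * Q 0 * P 1 else 0)" for e
  define m where "m i = (if i < 3 then 1 else 0::nat)" for i :: nat
  have d: "a2 \<noteq> del 0" "a2 \<noteq> del 1" "a2 \<noteq> z" "del 0 \<noteq> del 1" "del 0 \<noteq> z" "del 1 \<noteq> z"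
  proof -
    have fn: "\<And>f g k. f k \<noteq> g k \<Longrightarrow> f \<noteq> g" by auto
    show "a2 \<noteq> del 0" by (rule fn[of _ 1]) (simp add: a2_def del_def)
    show "a2 \<noteq> del 1" by (rule fn[of _ 0]) (simp add: a2_def del_def)
    show "a2 \<noteq> z" by (rule fn[of _ 0]) (simp add: a2_def z_def)
    show "del 0 \<noteq> del 1" by (rule fn[of _ 0]) (simp add: del_def)
    show "del 0 \<noteq> z" by (rule fn[of _ 0]) (simp add: del_def z_def)
    show "del 1 \<noteq> z" by (rule fn[of _ 1]) (simp add: del_def z_def)
  qed
  have ex: "a2 \<in> exps n a2" "del 0 \<in> exps n a2" "del 1 \<in> exps n a2" "z \<in> exps n a2"
    using n by (auto simp: exps_def a2_def del_def z_def)
  have pa2: "(\<Prod>l<n. p l ^ a2 l) = p 0 * p 1" for p :: "nat \<Rightarrow> complex"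
  proof -
    have "(\<Prod>l<n. p l ^ a2 l) = (\<Prod>l<n. if l \<in> {..<2} then p l else 1)"
      by (intro prod.cong) (auto simp: a2_def)
    also have "\<dots> = (\<Prod>l\<in>{..<n} \<inter> {..<2}. p l)" by (simp add: prod.inter_restrict)
    also have "{..<n} \<inter> {..<2} = {..<2::nat}" using n by auto
    finally show ?thesis by (simp add: numeral_2_eq_2)
  qed
  have fe: "feval n a2 c p = A * (p 0 - P 0) * (p 1 - Q 1) + B * (p 0 - Q 0) * (p 1 - P 1)" for p
  proof -
    have "feval n a2 c p = (\<Sum>e\<in>{a2, del 0, del 1, z}. c e * (\<Prod>j<n. p j ^ e j))"
      using ex by (intro feval_supp) (auto simp: c_def)
    also have "\<dots> = (A + B) * (p 0 * p 1) + (- A * Q 1 - B * P 1) * p 0 + (- A * P 0 - B * Q 0) * p 1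
        + (A * P 0 * Q 1 + B * Q 0 * P 1)"
      using d n pa2[of p] prod_del[of 0 n p] prod_del[of 1 n p] by (simp add: c_def z_def)
    also have "\<dots> = A * (p 0 - P 0) * (p 1 - Q 1) + B * (p 0 - Q 0) * (p 1 - P 1)"
      by (simp add: algebra_simps)
    finally show ?thesis .
  qed
  have g01: "P j \<noteq> Q j" "T j \<noteq> P j" "T j \<noteq> Q j" if "j < n" for j
  proof -
    have gg: "\<And>i i' j. i<r \<Longrightarrow> i'<r \<Longrightarrow> i\<noteq>i' \<Longrightarrow> j<n \<Longrightarrow> x(i,j) \<noteq> x(i',j)"
      using g unfolding generic_def by blast
    show "P j \<noteq> Q j" using gg[of 0 1 j] r that by (simp add: P_def Q_def)
    show "T j \<noteq> P j" using gg[of 2 0 j] r that by (simp add: T_def P_def)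
    show "T j \<noteq> Q j" using gg[of 2 1 j] r that by (simp add: T_def Q_def)
  qed
  have nz: "\<exists>e\<in>exps n a2. c e \<noteq> 0"
  proof (cases "A + B = 0")
    case False then show ?thesis using ex(1) by (intro bexI[of _ a2]) (simp_all add: c_def)
  next
    case True
    then have "B = - A" by (simp add: eq_neg_iff_add_eq_0 add.commute)
    moreover have "A \<noteq> 0" using g01[of 0] g01[of 1] n by (simp add: A_def)
    moreover have "P 1 - Q 1 \<noteq> 0" using g01[of 1] n by simp
    ultimately have "- A * Q 1 - B * P 1 \<noteq> 0"
    proof -
      assume "B = - A" "A \<noteq> 0" "P 1 - Q 1 \<noteq> 0"
      then have "- A * Q 1 - B * P 1 = A * (P 1 - Q 1)" by (simp add: algebra_simps)
      then show ?thesis using \<open>A \<noteq> 0\<close> \<open>P 1 - Q 1 \<noteq> 0\<close> by simp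
    qed
    then show ?thesis using ex(2) d by (intro bexI[of _ "del 0"]) (simp_all add: c_def)
  qed
  have mg: "\<forall>i<r. mult_ge n a2 c (\<lambda>j. x (i, j)) (m i)"
  proof (intro allI impI)
    fix i assume "i < r"
    show "mult_ge n a2 c (\<lambda>j. x (i, j)) (m i)"
    proof (cases "i < 3")
      case False then show ?thesis by (simp add: m_def mult_ge_0)
    next
      case True
      then have "i = 0 \<or> i = 1 \<or> i = 2" by auto
      then have "feval n a2 c (\<lambda>j. x (i, j)) = 0"
        by (elim disjE) (simp_all add: fe A_def B_def P_def Q_def T_def algebra_simps)
      then show ?thesis using True mult_ge_1 by (simp add: m_def)
    qed
  qed
  define v where "v = (\<lambda>k. if k < n then real (a2 k) else if k < n + r then - real (m (k - n)) else 0)"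
  have "v \<in> eff_gens n r x" unfolding eff_gens_def v_def using nz mg by blast
  then have vp: "v \<in> pseff n r x" unfolding pseff_def
    using gen_cone_base closure_subset by blast
  have s1: "(\<Sum>j<n. v j) = 2"
  proof -
    have "(\<Sum>j<n. v j) = (\<Sum>j<n. if j \<in> {..<2} then 1 else 0)"
      by (intro sum.cong) (auto simp: v_def a2_def)
    also have "\<dots> = (\<Sum>j\<in>{..<n} \<inter> {..<2::nat}. 1)" by (simp only: sum.inter_restrict[OF finite_lessThan])
    also have "{..<n} \<inter> {..<2::nat} = {..<2}" using n by auto
    finally show ?thesis by simp
  qed
  have s2: "(\<Sum>i<r. v (n+i)) = - 3"
  proof -
    have "(\<Sum>i<r. v (n+i)) = (\<Sum>i<r. if i \<in> {..<3} then - 1 else 0)"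
      by (intro sum.cong) (auto simp: v_def m_def)
    also have "\<dots> = (\<Sum>j\<in>{..<r} \<inter> {..<3::nat}. - 1)" by (simp only: sum.inter_restrict[OF finite_lessThan])
    also have "{..<r} \<inter> {..<3::nat} = {..<3}" using r by auto
    finally show ?thesis by simp
  qed
  have "v \<notin> cone_fibers n r" using CF_lin[of v n r] s1 s2 by auto
  then show ?thesis using vp unfolding fiber_generated_def by blast
qed

definition dlt :: "nat \<times> nat \<Rightarrow> nat \<times> nat \<Rightarrow> nat" where
  "dlt w = (\<lambda>v. if v = w then 1 else 0)"

definition polF :: "nat \<times> nat \<times> nat \<Rightarrow> (nat \<times> nat \<Rightarrow> nat) set \<times> ((nat \<times> nat \<Rightarrow> nat) \<Rightarrow> complex)" where
  "polF t = (case t of (i, i', j) \<Rightarrow> ({dlt (i,j), dlt (i',j)},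
     \<lambda>e. if e = dlt (i,j) then 1 else if e = dlt (i',j) then -1 else 0))"

lemma prod_dlt: "finite V \<Longrightarrow> w \<in> V \<Longrightarrow> (\<Prod>v\<in>V. x v ^ dlt w v) = (x w :: complex)"
proof -
  assume V: "finite V" "w \<in> V"
  have "(\<Prod>v\<in>V. x v ^ dlt w v) = (\<Prod>v\<in>V. if v = w then x v else 1)"
    by (intro prod.cong) (auto simp: dlt_def)
  also have "\<dots> = x w" using V by (simp add: prod.delta')
  finally show ?thesis .
qed

lemma dlt_ne: "w \<noteq> w' \<Longrightarrow> dlt w \<noteq> dlt w'"
proof
  assume "w \<noteq> w'" "dlt w = dlt w'"
  then have "dlt w w = dlt w' w" by simp
  then show False using \<open>w \<noteq> w'\<close> by (simp add: dlt_def)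
qed

lemma polF_props:
  assumes "i < r" "i' < r" "i \<noteq> i'" "j < n"
  shows "mpoly_nonzero ({..<r} \<times> {..<n}) (fst (polF (i,i',j))) (snd (polF (i,i',j)))"
    and "mpoly_eval ({..<r} \<times> {..<n}) (fst (polF (i,i',j))) (snd (polF (i,i',j))) x = x (i,j) - x (i',j)"
proof -
  have ne: "dlt (i,j) \<noteq> dlt (i',j)" using assms(3) by (intro dlt_ne) simp
  show "mpoly_nonzero ({..<r} \<times> {..<n}) (fst (polF (i,i',j))) (snd (polF (i,i',j)))"
    unfolding mpoly_nonzero_def polF_def using assms by (auto simp: dlt_def)
  have "mpoly_eval ({..<r} \<times> {..<n}) (fst (polF (i,i',j))) (snd (polF (i,i',j))) x =
     (\<Prod>v\<in>{..<r} \<times> {..<n}. x v ^ dlt (i,j) v) - (\<Prod>v\<in>{..<r} \<times> {..<n}. x v ^ dlt (i',j) v)"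
    unfolding mpoly_eval_def polF_def using ne by simp
  also have "\<dots> = x (i,j) - x (i',j)" using assms by (simp add: prod_dlt)
  finally show "mpoly_eval ({..<r} \<times> {..<n}) (fst (polF (i,i',j))) (snd (polF (i,i',j))) x = x (i,j) - x (i',j)" .
qed

theorem corollary2p6:
  fixes n r :: nat
  assumes "n \<ge> 2" and "r \<ge> 1"
  shows "very_general ({..<r} \<times> {..<n})
           (\<lambda>x. fiber_generated n r x \<longleftrightarrow> r \<le> 2)"
proof -
  define I where "I = {t :: nat \<times> nat \<times> nat. fst t < r \<and> fst (snd t) < r \<and> fst t \<noteq> fst (snd t) \<and> snd (snd t) < n}"
  define F where "F = polF ` I"
  have "I \<subseteq> {..<r} \<times> {..<r} \<times> {..<n}" by (auto simp: I_def)
  then have "finite I" by (rule finite_subset) simp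
  then have cF: "countable F" unfolding F_def by (intro countable_finite finite_imageI)
  have nzF: "\<forall>(S, c)\<in>F. mpoly_nonzero ({..<r} \<times> {..<n}) S c"
  proof (intro ballI)
    fix p assume "p \<in> F"
    then obtain i i' j where t: "(i,i',j) \<in> I" "p = polF (i,i',j)" unfolding F_def by auto
    then have "mpoly_nonzero ({..<r} \<times> {..<n}) (fst p) (snd p)"
      using polF_props(1) by (auto simp: I_def)
    then show "case p of (S, c) \<Rightarrow> mpoly_nonzero ({..<r} \<times> {..<n}) S c" by (simp add: case_prod_beta)
  qed
  have main: "fiber_generated n r x \<longleftrightarrow> r \<le> 2"
    if x: "\<forall>(S, c)\<in>F. mpoly_eval ({..<r} \<times> {..<n}) S c x \<noteq> 0" for x
  proof -
    have "generic n r x" unfolding generic_def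
    proof (intro allI impI)
      fix i i' j assume h: "i < r" "i' < r" "i \<noteq> i'" "j < n"
      then have "polF (i,i',j) \<in> F" by (auto simp: F_def I_def)
      then have "mpoly_eval ({..<r} \<times> {..<n}) (fst (polF (i,i',j))) (snd (polF (i,i',j))) x \<noteq> 0"
        using x by (auto simp: case_prod_beta)
      then show "x (i, j) \<noteq> x (i', j)" using polF_props(2)[OF h] by simp
    qed
    then show ?thesis using fg_small not_fg_large assms by (cases "r \<le> 2") auto
  qed
  show ?thesis unfolding very_general_def using cF nzF main by blast
qed


end
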